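(* Let $G=(V,E)$ be a finite graph, $x_e>0$ for $e\in E$, $\Omega=\{0,1\}^E$ and $\Sigma\subset\Omega$. Suppose that $\Sigma$ contains two elements $\eta'\subset\eta$ with $\prod_{e\in\eta'}x_e<\prod_{e\in\eta}x_e$. Then there exists no probability measure $\mathscr{P}$ on $\Omega\times\Sigma$ whose marginal on $\Sigma$ satisfies $\mathscr{P}_\Sigma[\eta]\propto\prod_{e\in\eta}x_e$ and such that, for every $\omega$ with $\mathscr{P}_\Omega[\omega]\neq0$, the conditional measure $\mathscr{P}[\cdot\mid\omega]$ is the uniform measure on $\Sigma^\downarrow(\omega):=\{\eta\in\Sigma\mid\eta\subset\omega\}$.
   Context: Elements of $\{0,1\}^E$ are identified with subsets of $E$; $\mathscr{P}_\Omega$ denotes the marginal on $\Omega$. *)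

theory Defs
  imports "HOL-Probability.Probability"
begin

definition down_set :: "'e set set \<Rightarrow> 'e set \<Rightarrow> 'e set set" where
  "down_set S \<omega> = {\<eta> \<in> S. \<eta> \<subseteq> \<omega>}"

end

theory Submission
  imports Defs
begin

lemma meas_squeeze:
  fixes M :: "'a pmf"
  assumes "set_pmf M \<inter> A \<subseteq> B" "B \<subseteq> A"
  shows "measure M A = measure M B"
proof -
  have "measure M A = measure M (A \<inter> set_pmf M)" by (simp add: measure_Int_set_pmf)
  also have "\<dots> \<le> measure M B" using assms by (intro measure_pmf.finite_measure_mono) auto
  finally show ?thesis using assms measure_pmf.finite_measure_mono[of B A M] by auto
qed

lemma pmf_snd_single:
  fixes M :: "('a \<times> 'b) pmf"
  assumes "set_pmf M \<subseteq> {z. fst z = w}"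
  shows "pmf (map_pmf snd M) y = pmf M (w, y)"
proof -
  have "pmf (map_pmf snd M) y = measure M (snd -` {y})" by (simp add: pmf_map)
  also have "\<dots> = measure M {(w,y)}" using assms by (intro meas_squeeze) auto
  finally show ?thesis by (simp add: measure_pmf_single)
qed

lemma pmf_snd_sum:
  fixes M :: "('a \<times> 'b) pmf"
  assumes "set_pmf M \<subseteq> W \<times> T" "finite W"
  shows "pmf (map_pmf snd M) y = (\<Sum>w\<in>W. pmf M (w, y))"
proof -
  have "pmf (map_pmf snd M) y = measure M (snd -` {y})" by (simp add: pmf_map)
  also have "\<dots> = measure M ((\<lambda>w. (w,y)) ` W)" using assms by (intro meas_squeeze) auto
  also have "\<dots> = sum (pmf M) ((\<lambda>w. (w,y)) ` W)"
    using assms by (intro measure_measure_pmf_finite) auto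
  also have "\<dots> = (\<Sum>w\<in>W. pmf M (w, y))" by (subst sum.reindex) (auto simp: inj_on_def)
  finally show ?thesis .
qed

theorem lemma3p4:
  fixes E :: "'e set" and x :: "'e \<Rightarrow> real" and S :: "'e set set"
    and \<eta>' \<eta> :: "'e set"
  assumes "finite E"
    and "\<forall>e\<in>E. x e > 0"
    and "S \<subseteq> Pow E"
    and "\<eta>' \<in> S" and "\<eta> \<in> S" and "\<eta>' \<subseteq> \<eta>"
    and "(\<Prod>e\<in>\<eta>'. x e) < (\<Prod>e\<in>\<eta>. x e)"
  shows "\<not> (\<exists>P :: ('e set \<times> 'e set) pmf.
            set_pmf P \<subseteq> Pow E \<times> S
          \<and> (\<exists>c. \<forall>\<zeta>\<in>S. pmf (map_pmf snd P) \<zeta> = c * (\<Prod>e\<in>\<zeta>. x e))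
          \<and> (\<forall>\<omega>. pmf (map_pmf fst P) \<omega> \<noteq> 0 \<longrightarrow>
                 down_set S \<omega> \<noteq> {} \<and>
                 map_pmf snd (cond_pmf P {z. fst z = \<omega>}) = pmf_of_set (down_set S \<omega>)))"
proof
  assume "\<exists>P :: ('e set \<times> 'e set) pmf.
            set_pmf P \<subseteq> Pow E \<times> S
          \<and> (\<exists>c. \<forall>\<zeta>\<in>S. pmf (map_pmf snd P) \<zeta> = c * (\<Prod>e\<in>\<zeta>. x e))
          \<and> (\<forall>\<omega>. pmf (map_pmf fst P) \<omega> \<noteq> 0 \<longrightarrow>
                 down_set S \<omega> \<noteq> {} \<and>
                 map_pmf snd (cond_pmf P {z. fst z = \<omega>}) = pmf_of_set (down_set S \<omega>))"
  then obtain P c where sP: "set_pmf P \<subseteq> Pow E \<times> S"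
    and hc: "\<forall>\<zeta>\<in>S. pmf (map_pmf snd P) \<zeta> = c * (\<Prod>e\<in>\<zeta>. x e)"
    and hcond: "\<forall>\<omega>. pmf (map_pmf fst P) \<omega> \<noteq> 0 \<longrightarrow>
                 down_set S \<omega> \<noteq> {} \<and>
                 map_pmf snd (cond_pmf P {z. fst z = \<omega>}) = pmf_of_set (down_set S \<omega>)"
    by blast
  have finS: "finite S" using assms(1,3) finite_subset by (metis finite_Pow_iff)
  have prodpos: "(\<Prod>e\<in>\<zeta>. x e) > 0" if "\<zeta> \<in> S" for \<zeta>
    using that assms(2,3) by (intro prod_pos) auto
  have pw: "pmf P (w, \<eta>) \<le> pmf P (w, \<eta>')" for w
  proof (cases "pmf P (w, \<eta>) = 0")
    case True then show ?thesis by simp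
  next
    case False
    then have inP: "(w, \<eta>) \<in> set_pmf P" by (simp add: set_pmf_iff)
    then have "w \<in> set_pmf (map_pmf fst P)" by force
    then have "pmf (map_pmf fst P) w \<noteq> 0" by (metis set_pmf_iff)
    with hcond have D: "down_set S w \<noteq> {}"
      and eq: "map_pmf snd (cond_pmf P {z. fst z = w}) = pmf_of_set (down_set S w)" by auto
    have finD: "finite (down_set S w)" using finS by (simp add: down_set_def)
    have ne: "set_pmf P \<inter> {z. fst z = w} \<noteq> {}" using inP by auto
    have sc: "set_pmf (cond_pmf P {z. fst z = w}) \<subseteq> {z. fst z = w}"
      using set_cond_pmf[OF ne] by auto
    have "(w, \<eta>) \<in> set_pmf (cond_pmf P {z. fst z = w})"
      using set_cond_pmf[OF ne] inP by auto
    then have "\<eta> \<in> set_pmf (map_pmf snd (cond_pmf P {z. fst z = w}))" by force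
    then have "\<eta> \<in> down_set S w" unfolding eq using finD D by simp
    then have "\<eta>' \<in> down_set S w" using assms(4,6) by (auto simp: down_set_def)
    note hD = \<open>\<eta> \<in> down_set S w\<close> this
    have key: "pmf P (w, y) = measure P {z. fst z = w} / real (card (down_set S w))"
      if "y \<in> down_set S w" for y
    proof -
      have "pmf P (w, y) / measure P {z. fst z = w} = pmf (cond_pmf P {z. fst z = w}) (w, y)"
        using pmf_cond[OF ne] by simp
      also have "\<dots> = pmf (map_pmf snd (cond_pmf P {z. fst z = w})) y"
        using pmf_snd_single[OF sc] by simp
      also have "\<dots> = 1 / real (card (down_set S w))" unfolding eq using finD D that by simp
      finally have h: "pmf P (w, y) / measure P {z. fst z = w} = 1 / real (card (down_set S w))" .
      have "measure P {z. fst z = w} \<noteq> 0"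
        using ne by (simp add: measure_pmf_zero_iff)
      with h show ?thesis by (simp add: field_simps)
    qed
    show ?thesis using key[OF hD(1)] key[OF hD(2)] by simp
  qed
  have "pmf (map_pmf snd P) \<eta> \<le> pmf (map_pmf snd P) \<eta>'"
    using pmf_snd_sum[OF sP] assms(1) pw by (simp add: sum_mono)
  then have le: "c * (\<Prod>e\<in>\<eta>. x e) \<le> c * (\<Prod>e\<in>\<eta>'. x e)" using hc assms(4,5) by simp
  have "set_pmf (map_pmf snd P) \<noteq> {}" by (rule set_pmf_not_empty)
  then obtain \<zeta> where z: "\<zeta> \<in> set_pmf (map_pmf snd P)" by blast
  then have zS: "\<zeta> \<in> S" using sP by auto
  have "pmf (map_pmf snd P) \<zeta> > 0" using z by (simp add: pmf_positive)
  then have "c > 0" using hc zS prodpos[OF zS] by (simp add: zero_less_mult_iff)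
  then show False using le assms(7) by simp
qed

end
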